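(* Let $n\ge2$, $l\ge1$, $s\in\{+1,-1\}$ and $i_2,\dots,i_{2l}\in\{0,1\}$ with $0i_2\cdots i_l=i_{l+1}\cdots i_{2l}$ or $0i_2\cdots i_l=\bar i_{l+1}\cdots\bar i_{2l}$. Let $$|\mathscr{G}\rangle=\tfrac{1}{\sqrt2}\Big(|0\rangle\textstyle\bigotimes_{k=2}^{2l}|i_k\rangle+s\,|1\rangle\bigotimes_{k=2}^{2l}|\bar i_k\rangle\Big)$$ and consider $n$ identical copies $|\mathscr{G}\rangle^{\otimes n}$. Perform a projective measurement in the GHZ basis (Bell basis when $n=2$, $l=1$) on the first $l$ qubits of each copy (ordered by copy), and let $|\mathcal{G}_a\rangle$ be the outcome and $|\mathcal{G}_b\rangle$ the state into which the remaining qubits (the last $l$ qubits of each copy, ordered by copy) collapse. If $s=+1$, then $|\mathcal{G}_a\rangle$ and $|\mathcal{G}_b\rangle$ are the same. If $s=-1$, then they are the same when $n$ is even and different when $n$ is odd.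
   Context: For a bit $b$, $\bar b=1-b$. For $N\ge 2$ qubits, the GHZ basis is the orthonormal basis $\frac{1}{\sqrt2}\big(|0\,b_2\cdots b_N\rangle\pm|1\,\bar b_2\cdots\bar b_N\rangle\big)$, $b_k\in\{0,1\}$; for $N=2$ it is the Bell basis. "Same" means equal as quantum states (up to a global phase). *)

theory Defs
  imports Complex_Main
begin

text \<open>States of m qubits are amplitude functions on bit strings (bool lists,
False = 0, True = 1); only strings of length m are relevant.\<close>

definition ket :: "bool list \<Rightarrow> bool list \<Rightarrow> complex" where
  "ket w = (\<lambda>v. if v = w then 1 else 0)"

definition ghz_basis :: "nat \<Rightarrow> (bool list \<Rightarrow> complex) set" where
  "ghz_basis m = {(\<lambda>v. (ket (False # b) v + \<sigma> * ket (True # map Not b) v) / complex_of_real (sqrt 2))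
                   | b \<sigma>. length b = m - 1 \<and> (\<sigma> = 1 \<or> \<sigma> = -1)}"

definition single_state :: "real \<Rightarrow> bool list \<Rightarrow> bool list \<Rightarrow> complex" where
  "single_state s is = (\<lambda>w. (ket (False # is) w + complex_of_real s * ket (True # map Not is) w)
                              / complex_of_real (sqrt 2))"

definition chunk :: "nat \<Rightarrow> nat \<Rightarrow> bool list \<Rightarrow> bool list" where
  "chunk l k u = take l (drop (k * l) u)"

text \<open>Amplitude of the n-fold tensor power, with the register A (first l qubits of each
copy, ordered by copy) given by u and register B (last l qubits of each copy, ordered by copy)
given by v.\<close>
definition joint_state :: "nat \<Rightarrow> nat \<Rightarrow> real \<Rightarrow> bool list \<Rightarrow> bool list \<Rightarrow> bool list \<Rightarrow> complex" where
  "joint_state n l s is u v =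
     (if length u = n * l \<and> length v = n * l
      then (\<Prod>k<n. single_state s is (chunk l k u @ chunk l k v)) else 0)"

definition post_state :: "nat \<Rightarrow> nat \<Rightarrow> real \<Rightarrow> bool list \<Rightarrow> (bool list \<Rightarrow> complex) \<Rightarrow> bool list \<Rightarrow> complex" where
  "post_state n l s is g v = (\<Sum>u\<in>{u. length u = n * l}. cnj (g u) * joint_state n l s is u v)"

definition outcome_prob :: "nat \<Rightarrow> nat \<Rightarrow> real \<Rightarrow> bool list \<Rightarrow> (bool list \<Rightarrow> complex) \<Rightarrow> real" where
  "outcome_prob n l s is g = (\<Sum>v\<in>{v. length v = n * l}. (cmod (post_state n l s is g v))\<^sup>2)"

definition collapsed_state :: "nat \<Rightarrow> nat \<Rightarrow> real \<Rightarrow> bool list \<Rightarrow> (bool list \<Rightarrow> complex) \<Rightarrow> bool list \<Rightarrow> complex" where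
  "collapsed_state n l s is g = (\<lambda>v. post_state n l s is g v / complex_of_real (sqrt (outcome_prob n l s is g)))"

definition same_state :: "(bool list \<Rightarrow> complex) \<Rightarrow> (bool list \<Rightarrow> complex) \<Rightarrow> bool" where
  "same_state \<phi> \<psi> \<longleftrightarrow> (\<exists>c. cmod c = 1 \<and> \<phi> = (\<lambda>v. c * \<psi> v))"

end

theory Submission
  imports Defs
begin

definition flip :: "bool \<Rightarrow> bool list \<Rightarrow> bool list" where
  "flip f p = (if f then map Not p else p)"

lemma flip_not: "flip f (map Not p) = map Not (flip f p)"
  by (simp add: flip_def)

lemma length_flip[simp]: "length (flip f p) = length p"
  by (simp add: flip_def)

lemma chunk_map: "chunk l k (map h u) = map h (chunk l k u)"
  by (simp add: chunk_def take_map drop_map)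

lemma chunk_flip: "chunk l k (flip f u) = flip f (chunk l k u)"
  by (simp add: flip_def chunk_map)

lemma length_chunk:
  assumes "length u = n * l" "k < n"
  shows "length (chunk l k u) = l"
proof -
  have "(k + 1) * l \<le> n * l" using assms(2) by (intro mult_right_mono) auto
  then show ?thesis using assms by (simp add: chunk_def algebra_simps)
qed

lemma list_eq_chunks:
  assumes "length u = n * l" "length v = n * l" "\<forall>k<n. chunk l k u = chunk l k v"
  shows "u = v"
proof (rule nth_equalityI)
  show "length u = length v" using assms by simp
next
  fix i assume i: "i < length u"
  then have l0: "l > 0" using assms(1) by (cases l) auto
  define k where "k = i div l"
  define j where "j = i mod l"
  have ij: "i = k * l + j" unfolding k_def j_def by simp
  have jl: "j < l" unfolding j_def using l0 by simp
  have kn: "k < n" using i assms(1) unfolding k_def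
    by (simp add: l0 div_less_iff_less_mult)
  have "k * l + j < n * l" using ij i assms(1) by simp
  then have "k * l \<le> length u" "k * l \<le> length v" using assms by linarith+
  then have "chunk l k u ! j = u ! i"  "chunk l k v ! j = v ! i"
    using jl ij by (simp_all add: chunk_def)
  then show "u ! i = v ! i" using assms(3) kn by metis
qed

lemma map_not_not[simp]: "map (Not \<circ> Not) p = p"
  by (induct p) auto

lemma ket_not: "ket x (map Not y) = ket (map Not x) y"
proof -
  have "(map Not y = x) = (y = map Not x)" by auto
  then show ?thesis by (simp add: ket_def)
qed

lemma single_not:
  assumes "s * s = 1"
  shows "single_state s is (map Not y) = complex_of_real s * single_state s is y"
proof -
  have m: "map Not (map Not is) = is" by (simp add: comp_def)
  have "complex_of_real s * complex_of_real s = 1"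
    by (metis assms of_real_1 of_real_mult)
  then have ss: "complex_of_real s * (complex_of_real s * t) = t" for t
    by (metis mult.assoc mult_1)
  show ?thesis
    unfolding single_state_def ket_not
    by (simp add: m ss add_divide_distrib distrib_left times_divide_eq_right)
qed

lemma single_split:
  assumes len: "length is = 2 * l - 1" and l1: "l \<ge> 1"
    and fb: "drop l (False # is) = flip f (take l (False # is))"
    and p: "length p = l" and q: "length q = l"
  shows "single_state s is (p @ q) = (if q = flip f p then single_state s is (p @ flip f p) else 0)"
proof (cases "q = flip f p")
  case True then show ?thesis by simp
next
  case False
  define x where "x = False # is"
  have lx: "length x = 2 * l" using len l1 unfolding x_def by simp
  have "p @ q \<noteq> x"
  proof
    assume e: "p @ q = x"
    then have "p = take l x" "q = drop l x" using p by auto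
    then show False using False fb unfolding x_def by simp
  qed
  moreover have "p @ q \<noteq> map Not x"
  proof
    assume e: "p @ q = map Not x"
    then have "p = take l (map Not x)" "q = drop l (map Not x)" using p
      by (metis append_eq_conv_conj)+
    then have "p = map Not (take l x)" "q = map Not (drop l x)" by (simp_all add: take_map drop_map)
    then show False using False fb unfolding x_def by (simp add: flip_not)
  qed
  ultimately show ?thesis using False unfolding single_state_def x_def by (simp add: ket_def)
qed

definition FF :: "nat \<Rightarrow> nat \<Rightarrow> real \<Rightarrow> bool list \<Rightarrow> bool \<Rightarrow> bool list \<Rightarrow> complex" where
  "FF n l s is f u = (\<Prod>k<n. single_state s is (chunk l k u @ flip f (chunk l k u)))"

lemma joint_eq:
  assumes len: "length is = 2 * l - 1" and l1: "l \<ge> 1"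
    and fb: "drop l (False # is) = flip f (take l (False # is))"
    and u: "length u = n * l"
  shows "joint_state n l s is u v = (if v = flip f u then FF n l s is f u else 0)"
proof (cases "v = flip f u")
  case True
  then show ?thesis using u unfolding joint_state_def FF_def by (simp add: chunk_flip)
next
  case False
  show ?thesis
  proof (cases "length v = n * l")
    case False then show ?thesis unfolding joint_state_def using \<open>v \<noteq> flip f u\<close> by simp
  next
    case lv: True
    have "\<exists>k<n. chunk l k v \<noteq> chunk l k (flip f u)"
      using list_eq_chunks[of v n l "flip f u"] lv u False by auto
    then obtain k where k: "k < n" "chunk l k v \<noteq> flip f (chunk l k u)"
      by (auto simp: chunk_flip)
    have "single_state s is (chunk l k u @ chunk l k v) = 0"
      using single_split[OF len l1 fb, of "chunk l k u" "chunk l k v" s]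
        length_chunk[OF u k(1)] length_chunk[OF lv k(1)] k(2) by simp
    then have "(\<Prod>k<n. single_state s is (chunk l k u @ chunk l k v)) = 0"
      using k(1) by (intro prod_zero) auto
    then show ?thesis using False unfolding joint_state_def by simp
  qed
qed

lemma FF_not:
  assumes "s * s = 1"
  shows "FF n l s is f (map Not u) = complex_of_real s ^ n * FF n l s is f u"
proof -
  have "FF n l s is f (map Not u) = (\<Prod>k<n. complex_of_real s * single_state s is (chunk l k u @ flip f (chunk l k u)))"
    unfolding FF_def chunk_map flip_not
    by (metis (no_types, lifting) map_append single_not[OF assms])
  also have "\<dots> = complex_of_real s ^ n * FF n l s is f u"
    unfolding FF_def by (simp add: prod.distrib)
  finally show ?thesis .
qed

lemma sum_ket:
  assumes "w \<in> A" "finite A"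
  shows "(\<Sum>u\<in>A. ket w u * h u) = h w"
proof -
  have "(\<Sum>u\<in>A. ket w u * h u) = (\<Sum>u\<in>A. if u = w then h u else 0)"
    by (rule sum.cong) (auto simp: ket_def)
  also have "\<dots> = h w" using assms by simp
  finally show ?thesis .
qed

lemma key:
  assumes len: "length is = 2 * l - 1" and l1: "l \<ge> 1"
    and fb: "drop l (False # is) = flip f (take l (False # is))"
    and ss: "s * s = 1" and n2: "n \<ge> 2"
    and g: "g \<in> ghz_basis (n * l)"
    and pos: "outcome_prob n l s is g > 0"
  shows "same_state (collapsed_state n l s is g) g \<longleftrightarrow> complex_of_real s ^ n = 1"
proof -
  obtain c \<sigma> where gdef: "g = (\<lambda>v. (ket (False # c) v + \<sigma> * ket (True # map Not c) v) / complex_of_real (sqrt 2))"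
    and lc: "length c = n * l - 1" and sig: "\<sigma> = 1 \<or> \<sigma> = -1"
    using g unfolding ghz_basis_def by blast
  define w where "w = False # c"
  define wb where "wb = map Not w"
  have wb': "wb = True # map Not c" unfolding wb_def w_def by simp
  have nl: "n * l \<ge> 2" using n2 l1 by (metis mult_le_mono nat_mult_1_right)
  have lw: "length w = n * l" "length wb = n * l" using lc nl unfolding w_def wb_def by auto
  have wne: "w \<noteq> wb" "wb \<noteq> w" unfolding w_def wb' by auto
  define S where "S = {u :: bool list. length u = n * l}"
  have finS: "finite S" unfolding S_def by (rule finite_list_length)
  have wS: "w \<in> S" "wb \<in> S" using lw unfolding S_def by auto
  define r2 where "r2 = complex_of_real (sqrt 2)"
  have r2: "r2 \<noteq> 0" unfolding r2_def by simp
  have gw: "g = (\<lambda>v. (ket w v + \<sigma> * ket wb v) / r2)" unfolding gdef w_def wb' r2_def by simp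
  have cnjg: "cnj (g u) = g u" for u
    using sig unfolding gw r2_def by (auto simp: ket_def)
  define J where "J = joint_state n l s is"
  have post: "post_state n l s is g v = (J w v + \<sigma> * J wb v) / r2" for v
  proof -
    have "post_state n l s is g v = (\<Sum>u\<in>S. (ket w u * J u v + \<sigma> * (ket wb u * J u v)) / r2)"
      unfolding post_state_def cnjg unfolding S_def J_def gw by (simp add: times_divide_eq_left distrib_right mult.assoc)
    also have "\<dots> = ((\<Sum>u\<in>S. ket w u * J u v) + \<sigma> * (\<Sum>u\<in>S. ket wb u * J u v)) / r2"
      by (simp add: sum_divide_distrib[symmetric] sum.distrib sum_distrib_left)
    also have "\<dots> = (J w v + \<sigma> * J wb v) / r2"
      using sum_ket[OF wS(1) finS] sum_ket[OF wS(2) finS] by simp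
    finally show ?thesis .
  qed
  define cs where "cs = complex_of_real s"
  have cs2: "cs * cs = 1" unfolding cs_def by (metis ss of_real_1 of_real_mult)
  have csn2: "cs ^ n * cs ^ n = 1" by (metis cs2 power_mult_distrib power_one)
  have sig2: "\<sigma> * \<sigma> = 1" using sig by auto
  define Fw where "Fw = FF n l s is f w"
  have Jw: "J w v = (if v = flip f w then Fw else 0)" for v
    unfolding J_def Fw_def using joint_eq[OF len l1 fb lw(1)] by simp
  have Jwb: "J wb v = (if v = flip f wb then cs ^ n * Fw else 0)" for v
    unfolding J_def Fw_def cs_def using joint_eq[OF len l1 fb lw(2)] FF_not[OF ss] wb_def by simp
  define \<tau> where "\<tau> = \<sigma> * cs ^ n"
  define h where "h = (\<lambda>v. ket w v + \<tau> * ket wb v)"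
  have "\<exists>K. \<forall>v. post_state n l s is g v = K * h v"
  proof (cases f)
    case False
    show ?thesis
    proof (intro exI allI)
      fix v show "post_state n l s is g v = Fw / r2 * h v"
        unfolding post Jw Jwb h_def \<tau>_def using False wne
        by (cases "v = w"; cases "v = wb") (simp_all add: ket_def flip_def algebra_simps)
    qed
  next
    case True
    have fw: "flip f w = wb" "flip f wb = w" using True unfolding wb_def flip_def by (simp_all add: comp_def)
    show ?thesis
    proof (intro exI allI)
      fix v show "post_state n l s is g v = Fw * \<sigma> * cs ^ n / r2 * h v"
      proof (cases "v = w")
        case True
        then show ?thesis unfolding post Jw Jwb h_def \<tau>_def fw using wne by (simp add: ket_def algebra_simps)
      next
        case vw: False
        show ?thesis
        proof (cases "v = wb")
          case True
          have "Fw * \<sigma> * cs ^ n / r2 * (\<sigma> * cs ^ n) = Fw * (\<sigma> * \<sigma>) * (cs ^ n * cs ^ n) / r2"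
            by (simp add: algebra_simps)
          then show ?thesis unfolding post Jw Jwb h_def \<tau>_def fw using wne True sig2 csn2
            by (simp add: ket_def)
        next
          case False
          then show ?thesis unfolding post Jw Jwb h_def \<tau>_def fw using vw by (simp add: ket_def)
        qed
      qed
    qed
  qed
  then obtain K where K: "\<And>v. post_state n l s is g v = K * h v" by blast
  have "s = 1 \<or> s = -1" using ss by (simp add: square_eq_1_iff)
  then have ncs: "cmod cs = 1" unfolding cs_def by auto
  have ntau: "cmod \<tau> = 1" unfolding \<tau>_def using sig ncs by (auto simp: norm_mult norm_power)
  have hsq: "(cmod (h v))\<^sup>2 = (if v = w then 1 else 0) + (if v = wb then 1 else 0)" for v
    unfolding h_def using wne ntau by (cases "v = w"; cases "v = wb") (simp_all add: ket_def)
  have prob: "outcome_prob n l s is g = 2 * (cmod K)\<^sup>2"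
  proof -
    have "outcome_prob n l s is g = (\<Sum>v\<in>S. (cmod K)\<^sup>2 * ((if v = w then 1 else 0) + (if v = wb then 1 else 0)))"
      unfolding outcome_prob_def S_def[symmetric] K norm_mult power_mult_distrib hsq by simp
    also have "\<dots> = 2 * (cmod K)\<^sup>2"
      using finS wS by (simp add: sum_distrib_left[symmetric] sum.distrib sum.delta')
    finally show ?thesis .
  qed
  have K0: "K \<noteq> 0" using pos prob by auto
  define c0 where "c0 = K / complex_of_real (cmod K)"
  have c0n: "cmod c0 = 1" unfolding c0_def using K0 by (simp add: norm_divide)
  have c00: "c0 \<noteq> 0" using c0n by auto
  have sq: "sqrt (2 * (cmod K)\<^sup>2) = sqrt 2 * cmod K" by (simp add: real_sqrt_mult)
  have coll: "collapsed_state n l s is g = (\<lambda>v. c0 * (h v / r2))"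
    unfolding collapsed_state_def prob sq K c0_def r2_def using K0 by (simp add: of_real_mult mult.commute)
  show ?thesis
  proof
    assume "same_state (collapsed_state n l s is g) g"
    then obtain c' where c': "cmod c' = 1" "collapsed_state n l s is g = (\<lambda>v. c' * g v)"
      unfolding same_state_def by blast
    have e: "c0 * (h v / r2) = c' * g v" for v using c'(2) unfolding coll by metis
    have "c0 = c'" using e[of w] wne r2 unfolding h_def gw by (simp add: ket_def)
    then have "c0 * \<tau> = c0 * \<sigma>" using e[of wb] wne r2 unfolding h_def gw by (simp add: ket_def)
    then have "\<tau> = \<sigma>" using c00 by simp
    then have "\<sigma> * cs ^ n = \<sigma> * 1" unfolding \<tau>_def by simp
    then show "complex_of_real s ^ n = 1" using sig unfolding cs_def by auto
  next
    assume "complex_of_real s ^ n = 1"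
    then have "h = (\<lambda>v. g v * r2)" unfolding h_def gw \<tau>_def cs_def using r2 by auto
    then show "same_state (collapsed_state n l s is g) g"
      unfolding same_state_def coll using c0n r2 by (intro exI[of _ c0]) auto
  qed
qed

theorem corollary2:
  fixes n l :: nat and s :: real and "is" :: "bool list"
  assumes "n \<ge> 2" and "l \<ge> 1" and "s = 1 \<or> s = -1"
    and "length is = 2 * l - 1"
    and "take l (False # is) = drop l (False # is) \<or>
         take l (False # is) = map Not (drop l (False # is))"
  shows "(s = 1 \<longrightarrow> (\<forall>g\<in>ghz_basis (n * l). outcome_prob n l s is g > 0 \<longrightarrow>
             same_state (collapsed_state n l s is g) g))
       \<and> (s = -1 \<longrightarrow> (\<forall>g\<in>ghz_basis (n * l). outcome_prob n l s is g > 0 \<longrightarrow>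
             (same_state (collapsed_state n l s is g) g \<longleftrightarrow> even n)))"
proof -
  obtain f where fb: "drop l (False # is) = flip f (take l (False # is))"
    using assms(5) unfolding flip_def
    by (metis (no_types, lifting) map_not_not map_map)
  have ss: "s * s = 1" using assms(3) by auto
  note K = key[OF assms(4) assms(2) fb ss assms(1)]
  show ?thesis
  proof (intro conjI impI ballI)
    fix g assume "s = 1" "g \<in> ghz_basis (n * l)" "outcome_prob n l s is g > 0"
    then show "same_state (collapsed_state n l s is g) g" using K by simp
  next
    fix g assume "s = -1" "g \<in> ghz_basis (n * l)" "outcome_prob n l s is g > 0"
    moreover have "((-1::complex) ^ n = 1) = even n"
      by (cases "even n") (simp_all add: neg_one_odd_power)
    ultimately show "same_state (collapsed_state n l s is g) g \<longleftrightarrow> even n" using K by simp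
  qed
qed

end
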